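(* Fix an integer $b\geq 3$. For a positive integer $c$ and $d\in\{1,2\}$ set \[ I_{d,1}(c)=\bigcup_{j\in\mathbb{Z}}\left[\frac{b^{-j}}{db^c-2},\frac{2b^{-j}}{db^c-1}\right]\cap[0,1]. \] Then there exists $c_0$ such that for all integers $c\geq c_0$, \[ 2\mu_{ST}(I_{2,1}(c))-2\mu_{ST}(I_{1,1}(c))>\frac{1}{40}. \]
   Context: $\mu_{ST}$ denotes the Sato–Tate measure on $[-1,1]$, $d\mu_{ST}=\frac{2}{\pi}\sqrt{1-t^2}\,dt$. *)

theory Defs
  imports "HOL-Analysis.Analysis"
begin

definition sato_tate :: "real measure" where
  "sato_tate = density lborel
     (\<lambda>t. ennreal (indicator {-1..1} t * (2 / pi) * sqrt (1 - t\<^sup>2)))"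

definition mu_ST :: "real set \<Rightarrow> real" where
  "mu_ST A = measure sato_tate A"

definition I_d1 :: "nat \<Rightarrow> nat \<Rightarrow> nat \<Rightarrow> real set" where
  "I_d1 b d c = (\<Union>j::int. {real b powi (-j) / (real d * real b ^ c - 2) ..
                            2 * real b powi (-j) / (real d * real b ^ c - 1)}) \<inter> {0..1}"

end

theory Submission
  imports Defs
begin


lemma sets_ST[simp]: "sets sato_tate = sets borel"
  unfolding sato_tate_def by simp

lemma emeas_ST:
  assumes "-1 \<le> a" "a \<le> c" "c \<le> 1"
  shows "emeasure sato_tate {a..c} = ennreal (2/pi * integral {a..c} (\<lambda>t. sqrt (1 - t\<^sup>2)))"
proof -
  have "emeasure sato_tate {a..c} = (\<integral>\<^sup>+ x. ennreal (indicator {-1..1} x * (2 / pi) * sqrt (1 - x\<^sup>2)) * indicator {a..c} x \<partial>lborel)"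
    unfolding sato_tate_def by (rule emeasure_density) auto
  also have "\<dots> = (\<integral>\<^sup>+ x. ennreal (indicator {a..c} x * (2 / pi * sqrt (1 - x\<^sup>2))) \<partial>lborel)"
    using assms by (intro nn_integral_cong) (auto simp: indicator_def)
  also have "\<dots> = ennreal (2/pi * integral {a..c} (\<lambda>t. sqrt (1 - t\<^sup>2)))"
  proof (rule nn_integral_has_integral_lebesgue)
    fix x assume "x \<in> {a..c}"
    then have "x\<^sup>2 \<le> 1" using assms by (simp add: abs_square_le_1 abs_le_iff)
    then show "0 \<le> 2 / pi * sqrt (1 - x\<^sup>2)" by simp
  next
    have "(\<lambda>t. sqrt (1 - t\<^sup>2)) integrable_on {a..c}"
      by (intro integrable_continuous_interval continuous_intros)
    then show "((\<lambda>x. 2 / pi * sqrt (1 - x\<^sup>2)) has_integral 2 / pi * integral {a..c} (\<lambda>t. sqrt (1 - t\<^sup>2))) {a..c}"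
      by (intro has_integral_mult_right) (simp add: integrable_integral)
  qed
  finally show ?thesis .
qed

lemma fin_ST: "finite_measure sato_tate"
proof
  have "emeasure sato_tate (space sato_tate) = emeasure sato_tate {-1..1}"
  proof -
    have "emeasure sato_tate (space sato_tate) = (\<integral>\<^sup>+ x. ennreal (indicator {-1..1} x * (2 / pi) * sqrt (1 - x\<^sup>2)) * indicator UNIV x \<partial>lborel)"
      unfolding sato_tate_def by (subst emeasure_density) auto
    also have "\<dots> = (\<integral>\<^sup>+ x. ennreal (indicator {-1..1} x * (2 / pi) * sqrt (1 - x\<^sup>2)) * indicator {-1..1} x \<partial>lborel)"
      by (intro nn_integral_cong) (auto simp: indicator_def)
    also have "\<dots> = emeasure sato_tate {-1..1}"
      unfolding sato_tate_def by (subst emeasure_density) auto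
    finally show ?thesis .
  qed
  also have "\<dots> \<noteq> \<infinity>" by (subst emeas_ST) auto
  finally show "emeasure sato_tate (space sato_tate) \<noteq> \<infinity>" .
qed

interpretation ST: finite_measure sato_tate by (rule fin_ST)

lemma mu_ST_int:
  assumes "-1 \<le> a" "a \<le> c" "c \<le> 1"
  shows "mu_ST {a..c} = 2/pi * integral {a..c} (\<lambda>t. sqrt (1 - t\<^sup>2))"
proof -
  have "0 \<le> integral {a..c} (\<lambda>t. sqrt (1 - t\<^sup>2))"
    using assms by (intro integral_nonneg integrable_continuous_interval continuous_intros)
       (auto simp: abs_square_le_1 abs_le_iff)
  then show ?thesis unfolding mu_ST_def measure_def using emeas_ST[OF assms] by simp
qed

lemma int_bounds:
  assumes "0 \<le> a" "a \<le> c" "c \<le> 1"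
  shows "integral {a..c} (\<lambda>t. sqrt (1 - t\<^sup>2)) \<le> sqrt (1 - a\<^sup>2) * (c - a)"
    and "integral {a..c} (\<lambda>t. sqrt (1 - t\<^sup>2)) \<ge> sqrt (1 - c\<^sup>2) * (c - a)"
proof -
  have I: "((\<lambda>t. sqrt (1 - t\<^sup>2)) has_integral integral {a..c} (\<lambda>t. sqrt (1 - t\<^sup>2))) {a..c}"
    by (intro integrable_integral integrable_continuous_interval continuous_intros)
  have J: "((\<lambda>x. K) has_integral K * (c - a)) {a..c}" for K
    using has_integral_const_real[of K a c] assms by (simp add: mult.commute)
  show "integral {a..c} (\<lambda>t. sqrt (1 - t\<^sup>2)) \<le> sqrt (1 - a\<^sup>2) * (c - a)"
  proof (rule has_integral_le[OF I J])
    fix x assume "x \<in> {a..c}"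
    then have "a\<^sup>2 \<le> x\<^sup>2" using assms by (intro power_mono) auto
    then show "sqrt (1 - x\<^sup>2) \<le> sqrt (1 - a\<^sup>2)" by simp
  qed
  show "integral {a..c} (\<lambda>t. sqrt (1 - t\<^sup>2)) \<ge> sqrt (1 - c\<^sup>2) * (c - a)"
  proof (rule has_integral_le[OF J I])
    fix x assume "x \<in> {a..c}"
    then have "x\<^sup>2 \<le> c\<^sup>2" using assms by (intro power_mono) auto
    then show "sqrt (1 - c\<^sup>2) \<le> sqrt (1 - x\<^sup>2)" by simp
  qed
qed

lemma aux2: "(y::real) = z / 2 \<Longrightarrow> y * 2 = z" by simp

lemma int_half: "integral {1/2..1} (\<lambda>t. sqrt (1 - t\<^sup>2)) = pi/6 - sqrt 3 / 8"
proof -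
  define G where "G t = (t * sqrt (1 - t\<^sup>2) + arcsin t) / 2" for t :: real
  have "((\<lambda>t. sqrt (1 - t\<^sup>2)) has_integral (G 1 - G (1/2))) {1/2..1}"
  proof (rule fundamental_theorem_of_calculus_interior)
    show "continuous_on {1/2..1::real} G"
      unfolding G_def by (intro continuous_intros continuous_on_arcsin) auto
    fix x :: real assume x: "x \<in> {1/2<..<1}"
    then have x2: "x\<^sup>2 < 1" by (simp add: abs_square_less_1)
    have "(G has_real_derivative (sqrt (1 - x\<^sup>2) + x * (- (2 * x) / (2 * sqrt (1 - x\<^sup>2))) + inverse (sqrt (1 - x\<^sup>2))) / 2) (at x)"
      unfolding G_def using x x2
      by (auto intro!: derivative_eq_intros DERIV_arcsin simp: power2_eq_square inverse_eq_divide)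
    moreover have "(sqrt (1 - x\<^sup>2) + x * (- (2 * x) / (2 * sqrt (1 - x\<^sup>2))) + inverse (sqrt (1 - x\<^sup>2))) / 2 = sqrt (1 - x\<^sup>2)"
    proof -
      have s: "sqrt (1 - x\<^sup>2) > 0" using x2 by simp
      have "sqrt (1 - x\<^sup>2) * sqrt (1 - x\<^sup>2) = 1 - x\<^sup>2" using x2 by simp
      with s show ?thesis by (simp add: field_simps power2_eq_square)
    qed
    ultimately have "(G has_real_derivative sqrt (1 - x\<^sup>2)) (at x)" by (rule back_subst)
    then show "(G has_vector_derivative sqrt (1 - x\<^sup>2)) (at x)"
      by (simp add: has_real_derivative_iff_has_vector_derivative)
  qed simp
  moreover have "G 1 - G (1/2) = pi/6 - sqrt 3 / 8"
  proof -
    have "sqrt (1 - (1/2::real)\<^sup>2) = sqrt 3 / 2"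
      by (simp add: power2_eq_square real_sqrt_divide)
    then show ?thesis unfolding G_def by (simp add: field_simps)
  qed
  ultimately show ?thesis by (simp add: integral_unique)
qed



lemma sqrt_le_num: "0 \<le> y \<Longrightarrow> a \<le> y\<^sup>2 \<Longrightarrow> sqrt a \<le> y"
  by (metis real_sqrt_le_mono real_sqrt_abs abs_of_nonneg)

lemma numeric:
  fixes b :: nat and x p al be u S0 S1 S2 T1 T2 T3 :: real
  assumes b: "b \<ge> 3" and xb: "x = real b" and u: "u = 1/x" and p: "1/2 \<le> p" "p \<le> 0.5001"
    and al: "1 \<le> al" "al \<le> 1.001" and be: "1 \<le> be" "be \<le> 1.001"
    and hS0: "S0 \<ge> pi/6 - sqrt 3/8 - (p - 1/2)"
    and hS1: "S1 \<ge> 0.9428 * ((1 - p) * u)" and hS2: "S2 \<ge> 0.993 * ((1 - p) * u\<^sup>2)"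
    and hT1: "T1 \<le> (if x = 3 then 0.9429 * (1/2 - al/3) + 0.8661 * (2*be/3 - 1/2) else (2*be - al) * u)"
    and hT2: "T2 \<le> (2*be - al) * u\<^sup>2" and hT3: "T3 \<le> 2 * be * u^3"
  shows "2 * (2/pi * (S0 + S1 + S2)) - 2 * (2/pi * (T1 + T2 + T3)) > 1/40"
proof -
  have x: "x \<ge> 3" using b xb by simp
  have s3: "sqrt 3 \<le> 1.7321" by (rule sqrt_le_num) (auto simp: power2_eq_square)
  have pi1: "3.141592653588 \<le> pi" "pi \<le> 3.1415926535899" by (rule pi_approx)+
  have u0: "0 < u" using x u by simp
  have key: "(S0 + S1 + S2) - (T1 + T2 + T3) \<ge> 0.0197"
  proof (cases "x = 3")
    case True
    then have uu: "u = 1/3" using u by simp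
    show ?thesis using hS0 hS1 hS2 hT1 hT2 hT3 True s3 pi1 p al be
      unfolding uu by (simp add: power2_eq_square power3_eq_cube) argo
  next
    case False
    then have x4: "x \<ge> 4" using b xb by simp
    have "1/x \<le> 1/4" using x4 by (intro divide_left_mono) auto
    then have u4: "u \<le> 1/4" using u by simp
    have uu2: "u\<^sup>2 \<le> 1/16" using u4 u0 power_mono[of u "1/4" 2] by (simp add: power2_eq_square)
    have "u^3 \<le> (1/4)^3" using u4 u0 by (intro power_mono) auto
    then have uu3: "u^3 \<le> 1/64" by (simp add: power_divide)
    have a1: "0.9428 * ((1 - p) * u) \<ge> 0.9428 * 0.4999 * u"
      using p u0 by (simp add: mult_right_mono)
    have a2: "0.993 * ((1 - p) * u\<^sup>2) \<ge> 0" using p by simp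
    have a3: "(2*be - al) * u \<le> 1.002 * u" using al be u0 by (intro mult_right_mono) auto
    have a4: "(2*be - al) * u\<^sup>2 \<le> 1.002 * u\<^sup>2" using al be by (intro mult_right_mono) auto
    have a5: "2 * be * u^3 \<le> 2.002 * u^3" using be u0 by (intro mult_right_mono) auto
    have b1: "S1 \<ge> 0.9428 * 0.4999 * u" using hS1 a1 by linarith
    have b2: "S2 \<ge> 0" using hS2 a2 by linarith
    have b3: "T1 \<le> 1.002 * u" using hT1 a3 False by simp
    have b4: "T2 \<le> 1.002 * u\<^sup>2" using hT2 a4 by linarith
    have b5: "T3 \<le> 2.002 * u^3" using hT3 a5 by linarith
    show ?thesis using hS0 b1 b2 b3 b4 b5 s3 pi1 p uu2 uu3 u4 by simp
  qed
  have "2 * (2/pi * (S0 + S1 + S2)) - 2 * (2/pi * (T1 + T2 + T3)) = 4/pi * ((S0 + S1 + S2) - (T1 + T2 + T3))"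
    by (simp add: algebra_simps)
  also have "\<dots> \<ge> 4/pi * 0.0197" using key pi1 by (intro mult_left_mono) auto
  finally show ?thesis using pi1 by (simp add: divide_simps)
qed



lemma I_mem: "y \<in> I_d1 b d c \<longleftrightarrow> 0 \<le> y \<and> y \<le> 1 \<and> (\<exists>j::int. real b powi (-j) / (real d * real b ^ c - 2) \<le> y \<and> y \<le> 2 * real b powi (-j) / (real d * real b ^ c - 1))"
  by (auto simp: I_d1_def)

lemma I_sets: "I_d1 b d c \<in> sets sato_tate"
  unfolding I_d1_def sets_ST by (intro sets.Int sets.countable_UN') auto

lemma mu_sub: "A \<in> sets sato_tate \<Longrightarrow> B \<in> sets sato_tate \<Longrightarrow> mu_ST (A \<union> B) \<le> mu_ST A + mu_ST B"
  unfolding mu_ST_def by (intro measure_subadditive) auto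

lemma mu_un: "A \<in> sets sato_tate \<Longrightarrow> B \<in> sets sato_tate \<Longrightarrow> A \<inter> B = {} \<Longrightarrow> mu_ST (A \<union> B) = mu_ST A + mu_ST B"
  unfolding mu_ST_def by (rule ST.finite_measure_Union)

lemma mu_mono: "A \<subseteq> B \<Longrightarrow> B \<in> sets sato_tate \<Longrightarrow> mu_ST A \<le> mu_ST B"
  unfolding mu_ST_def by (rule ST.finite_measure_mono)

theorem lemma3p1:
  fixes b :: nat
  assumes "b \<ge> 3"
  shows "\<exists>c0::nat. \<forall>c::nat. c \<ge> c0 \<and> c \<ge> 1 \<longrightarrow>
           2 * mu_ST (I_d1 b 2 c) - 2 * mu_ST (I_d1 b 1 c) > 1 / 40"
proof (intro exI[of _ 10] allI impI)
  fix c :: nat assume "10 \<le> c \<and> 1 \<le> c"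
  then have c10: "c \<ge> 10" by simp
  define x where "x = real b"
  define B where "B = x ^ c"
  define u where "u = 1 / x"
  define p where "p = B / (2 * B - 2)"
  define al where "al = B / (B - 2)"
  define be where "be = B / (B - 1)"
  have x3: "x \<ge> 3" using assms by (simp add: x_def)
  have u0: "0 < u" and u3: "u \<le> 1/3" using x3 by (auto simp: u_def divide_simps)
  have B10: "B \<ge> 10000"
  proof -
    have "(3::real) ^ 10 \<le> 3 ^ c" using c10 by (intro power_increasing) auto
    also have "\<dots> \<le> x ^ c" using x3 by (intro power_mono) auto
    finally show ?thesis unfolding B_def by simp
  qed
  have Bx: "B * u = x ^ (c - 1)" "B * u\<^sup>2 = x ^ (c - 2)" "B * u ^ 3 = x ^ (c - 3)"
  proof -
    have "c = (c - 1) + 1" "c = (c - 2) + 2" "c = (c - 3) + 3" using c10 by auto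
    then have "B = x ^ (c - 1) * x ^ 1" "B = x ^ (c - 2) * x ^ 2" "B = x ^ (c - 3) * x ^ 3"
      unfolding B_def by (metis power_add)+
    then show "B * u = x ^ (c - 1)" "B * u\<^sup>2 = x ^ (c - 2)" "B * u ^ 3 = x ^ (c - 3)"
      using x3 by (simp_all add: u_def field_simps)
  qed
  have p1: "1/2 \<le> p" "p \<le> 0.5001" using B10 by (simp_all add: p_def field_simps)
  have al1: "1 \<le> al" "al \<le> 1.001" using B10 by (simp_all add: al_def field_simps)
  have be1: "1 \<le> be" "be \<le> 1.001" using B10 by (simp_all add: be_def field_simps)
  have u2: "0 < u\<^sup>2" "u\<^sup>2 \<le> 1/9" "0 < u ^ 3" "u ^ 3 \<le> 1/27" "u\<^sup>2 \<le> u" "u ^ 3 \<le> u\<^sup>2"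
  proof -
    show "0 < u\<^sup>2" "0 < u ^ 3" using u0 by simp_all
    show "u\<^sup>2 \<le> u" using u0 u3 by (simp add: power2_eq_square mult_le_cancel_right1)
    show "u ^ 3 \<le> u\<^sup>2" using u0 u3 by (simp add: power2_eq_square power3_eq_cube mult_le_cancel_right1)
    have "u\<^sup>2 \<le> (1/3)\<^sup>2" using u0 u3 by (intro power_mono) auto
    then show "u\<^sup>2 \<le> 1/9" by (simp add: power_divide)
    have "u ^ 3 \<le> (1/3) ^ 3" using u0 u3 by (intro power_mono) auto
    then show "u ^ 3 \<le> 1/27" by (simp add: power_divide)
  qed
  define A0 where "A0 = {p..1}"
  define A1 where "A1 = {p*u..u}"
  define A2 where "A2 = {p*u\<^sup>2..u\<^sup>2}"
  define C1 where "C1 = {al*u..2*be*u}"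
  define C2 where "C2 = {al*u\<^sup>2..2*be*u\<^sup>2}"
  define C3 where "C3 = {0..2*be*u^3}"
  have memI2: "y \<in> I_d1 b 2 c" if "0 \<le> y" "y \<le> 1" "p * v \<le> y" "y \<le> v" "B * v = x ^ n" "0 < v" for y v n
  proof -
    have "x ^ n / (2 * B - 2) = p * v" using B10 that(5) by (simp add: p_def field_simps)
    moreover have "v \<le> 2 * x ^ n / (2 * B - 1)" using B10 that(5,6) by (simp add: field_simps)
    moreover have "real b powi (- (- int n)) = x ^ n" by (simp add: x_def)
    ultimately show ?thesis unfolding I_mem using that
      by (intro conjI exI[of _ "- int n"]) (auto simp: B_def x_def)
  qed
  have pu: "0 < p * u" "0 < p * u\<^sup>2" using p1 u0 by auto
  have sub2: "(A0 \<union> A1) \<union> A2 \<subseteq> I_d1 b 2 c"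
  proof
    fix y assume "y \<in> (A0 \<union> A1) \<union> A2"
    then consider "y \<in> A0" | "y \<in> A1" | "y \<in> A2" by blast
    then show "y \<in> I_d1 b 2 c"
    proof cases
      case 1 then show ?thesis using memI2[of y 1 c] p1 by (auto simp: A0_def B_def)
    next
      case 2 then show ?thesis using memI2[of y u "c - 1"] p1 u0 u3 Bx pu by (auto simp: A1_def)
    next
      case 3 then show ?thesis using memI2[of y "u\<^sup>2" "c - 2"] p1 u2 u3 Bx pu by (auto simp: A2_def)
    qed
  qed
  have conv1: "al * v \<le> y \<and> y \<le> 2 * be * v" if "e / (B - 2) \<le> y" "y \<le> 2 * e / (B - 1)" "e = B * v" for e y v
    using that B10 by (simp add: al_def be_def field_simps)
  have sub1: "I_d1 b 1 c \<subseteq> (C1 \<union> C2) \<union> C3"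
  proof
    fix y assume "y \<in> I_d1 b 1 c"
    then obtain j :: int where y01: "0 \<le> y" "y \<le> 1"
      and j: "x powi (-j) / (B - 2) \<le> y" "y \<le> 2 * x powi (-j) / (B - 1)"
      unfolding I_mem by (auto simp: x_def B_def)
    define k where "k = - j"
    define e where "e = x powi k"
    have e: "e / (B - 2) \<le> y" "y \<le> 2 * e / (B - 1)" using j by (simp_all add: e_def k_def)
    have k3: "k = int (c - 1) \<or> k = int (c - 2) \<or> k \<le> int (c - 3)"
    proof (rule ccontr)
      assume "\<not> ?thesis"
      then have "int c \<le> k" using c10 by auto
      then have "x powi int c \<le> x powi k" using x3 by (intro power_int_increasing) auto
      then have "B \<le> e" by (simp add: B_def e_def)
      then have "B / (B - 2) \<le> e / (B - 2)" using B10 by (intro divide_right_mono) auto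
      moreover have "B / (B - 2) > 1" using B10 by simp
      ultimately show False using e y01 by linarith
    qed
    then show "y \<in> (C1 \<union> C2) \<union> C3"
    proof (elim disjE)
      assume "k = int (c - 1)"
      then have "e = B * u" using Bx by (simp add: e_def)
      then show ?thesis using conv1[OF e] by (simp add: C1_def)
    next
      assume "k = int (c - 2)"
      then have "e = B * u\<^sup>2" using Bx by (simp add: e_def)
      then show ?thesis using conv1[OF e] by (simp add: C2_def)
    next
      assume "k \<le> int (c - 3)"
      then have "x powi k \<le> x powi int (c - 3)" using x3 by (intro power_int_increasing) auto
      then have "e \<le> B * u ^ 3" using Bx by (simp add: e_def)
      then have "2 * e / (B - 1) \<le> 2 * (B * u ^ 3) / (B - 1)" using B10 by (intro divide_right_mono) auto
      also have "\<dots> = 2 * be * u ^ 3" by (simp add: be_def)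
      finally show ?thesis using e y01 by (simp add: C3_def)
    qed
  qed
  have M2: "mu_ST (I_d1 b 2 c) \<ge> mu_ST A0 + mu_ST A1 + mu_ST A2"
  proof -
    have d1: "A0 \<inter> A1 = {}" using p1 u3 by (auto simp: A0_def A1_def)
    have "u\<^sup>2 < p * u" using u0 u3 p1 by (simp add: power2_eq_square)
    then have d2: "(A0 \<union> A1) \<inter> A2 = {}" using p1 u3 u0 u2 by (auto simp: A0_def A1_def A2_def)
    have "mu_ST ((A0 \<union> A1) \<union> A2) = mu_ST A0 + mu_ST A1 + mu_ST A2"
      using d1 d2 by (simp add: mu_un A0_def A1_def A2_def)
    moreover have "mu_ST ((A0 \<union> A1) \<union> A2) \<le> mu_ST (I_d1 b 2 c)" using sub2 I_sets by (intro mu_mono) auto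
    ultimately show ?thesis by simp
  qed
  have M1: "mu_ST (I_d1 b 1 c) \<le> mu_ST C1 + mu_ST C2 + mu_ST C3"
  proof -
    have "mu_ST (I_d1 b 1 c) \<le> mu_ST ((C1 \<union> C2) \<union> C3)" using sub1 by (intro mu_mono) (auto simp: C1_def C2_def C3_def)
    also have "\<dots> \<le> mu_ST (C1 \<union> C2) + mu_ST C3" by (intro mu_sub) (auto simp: C1_def C2_def C3_def)
    also have "mu_ST (C1 \<union> C2) \<le> mu_ST C1 + mu_ST C2" by (intro mu_sub) (auto simp: C1_def C2_def)
    finally show ?thesis by simp
  qed
  define S where "S a c = integral {a..c} (\<lambda>t. sqrt (1 - t\<^sup>2))" for a c :: real
  have bu: "2 * be * u \<le> 2 * 1.001 * (1/3)" using be1 u0 u3 by (intro mult_mono) auto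
  have au: "al * u \<le> 2 * be * u" using al1 be1 u0 by (intro mult_right_mono) auto
  have bu2: "2 * be * u\<^sup>2 \<le> 2 * be * u" using be1 u2 by (intro mult_left_mono) auto
  have au2: "al * u\<^sup>2 \<le> 2 * be * u\<^sup>2" using al1 be1 u2 by (intro mult_right_mono) auto
  have bu3: "2 * be * u ^ 3 \<le> 2 * be * u\<^sup>2" using be1 u2 by (intro mult_left_mono) auto
  have al0: "0 \<le> al * u" "0 \<le> al * u\<^sup>2" "0 \<le> 2 * be * u ^ 3" using al1 be1 u0 u2 by auto
  have pu1: "p * u \<le> u" "p * u\<^sup>2 \<le> u\<^sup>2" using p1 u0 u2 by auto
  have mA0: "mu_ST A0 = 2/pi * S p 1" unfolding A0_def S_def using p1 by (intro mu_ST_int) auto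
  have mA1: "mu_ST A1 = 2/pi * S (p*u) u" unfolding A1_def S_def using pu pu1 u3 by (intro mu_ST_int) auto
  have mA2: "mu_ST A2 = 2/pi * S (p*u\<^sup>2) (u\<^sup>2)" unfolding A2_def S_def using pu pu1 u2 by (intro mu_ST_int) auto
  have mC1: "mu_ST C1 = 2/pi * S (al*u) (2*be*u)" unfolding C1_def S_def using al0 au bu by (intro mu_ST_int) auto
  have mC2: "mu_ST C2 = 2/pi * S (al*u\<^sup>2) (2*be*u\<^sup>2)" unfolding C2_def S_def using al0 au2 bu2 bu by (intro mu_ST_int) auto
  have mC3: "mu_ST C3 = 2/pi * S 0 (2*be*u^3)" unfolding C3_def S_def using al0 bu3 bu2 bu by (intro mu_ST_int) auto
  have intg: "(\<lambda>t. sqrt (1 - t\<^sup>2)) integrable_on {a..c}" for a c :: real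
    by (intro integrable_continuous_interval continuous_intros)
  have hS0: "S p 1 \<ge> pi/6 - sqrt 3/8 - (p - 1/2)"
  proof -
    have e1: "S (1/2) p + S p 1 = S (1/2) 1" unfolding S_def using p1 Henstock_Kurzweil_Integration.integral_combine[where a="1/2" and c=p and b=1, OF _ _ intg] by auto
    have e2: "S (1/2) 1 = pi/6 - sqrt 3/8" unfolding S_def by (rule int_half)
    have e3: "S (1/2) p \<le> sqrt (1 - (1/2)\<^sup>2) * (p - 1/2)" unfolding S_def using p1 by (intro int_bounds) auto
    have e4: "sqrt (1 - (1/2::real)\<^sup>2) * (p - 1/2) \<le> 1 * (p - 1/2)" using p1 by (intro mult_right_mono) auto
    have "S p 1 = (pi/6 - sqrt 3/8) - S (1/2) p" using e1 e2 by simp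
    also have "\<dots> \<ge> (pi/6 - sqrt 3/8) - (p - 1/2)" using e3 e4 by simp
    finally show ?thesis .
  qed
  have hS1: "S (p*u) u \<ge> 0.9428 * ((1 - p) * u)"
  proof -
    have f1: "S (p*u) u \<ge> sqrt (1 - u\<^sup>2) * (u - p * u)" unfolding S_def using pu pu1 u3 by (intro int_bounds) auto
    have f2: "0.9428 \<le> sqrt (1 - u\<^sup>2)" using u2 by (intro real_le_rsqrt) (simp add: power2_eq_square)
    have f3: "u - p * u = (1 - p) * u" by (simp add: algebra_simps)
    have f4: "0 \<le> (1 - p) * u" using p1 u0 by simp
    have "0.9428 * ((1 - p) * u) \<le> sqrt (1 - u\<^sup>2) * ((1 - p) * u)" using f2 f4 by (rule mult_right_mono)
    also have "\<dots> \<le> S (p*u) u" using f1 unfolding f3 .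
    finally show ?thesis .
  qed
  have hS2: "S (p*u\<^sup>2) (u\<^sup>2) \<ge> 0.993 * ((1 - p) * u\<^sup>2)"
  proof -
    have "S (p*u\<^sup>2) (u\<^sup>2) \<ge> sqrt (1 - (u\<^sup>2)\<^sup>2) * (u\<^sup>2 - p * u\<^sup>2)" unfolding S_def using pu pu1 u2 by (intro int_bounds) auto
    note f1 = this
    have "(u\<^sup>2)\<^sup>2 \<le> (1/9)\<^sup>2" using u2 by (intro power_mono) auto
    then have f2: "0.993 \<le> sqrt (1 - (u\<^sup>2)\<^sup>2)" by (intro real_le_rsqrt) (simp add: power2_eq_square)
    have f3: "u\<^sup>2 - p * u\<^sup>2 = (1 - p) * u\<^sup>2" by (simp add: algebra_simps)
    have f4: "0 \<le> (1 - p) * u\<^sup>2" using p1 u2 by simp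
    have "0.993 * ((1 - p) * u\<^sup>2) \<le> sqrt (1 - (u\<^sup>2)\<^sup>2) * ((1 - p) * u\<^sup>2)" using f2 f4 by (rule mult_right_mono)
    also have "\<dots> \<le> S (p*u\<^sup>2) (u\<^sup>2)" using f1 unfolding f3 .
    finally show ?thesis .
  qed
  have hT1: "S (al*u) (2*be*u) \<le> (if x = 3 then 0.9429 * (1/2 - al/3) + 0.8661 * (2*be/3 - 1/2) else (2*be - al) * u)"
  proof (cases "x = 3")
    case True
    then have uu: "u = 1/3" by (simp add: u_def)
    have a3: "al / 3 \<le> 1/2" "1/2 \<le> 2 * be / 3" "2 * be / 3 \<le> 1" "0 \<le> al / 3" using al1 be1 by auto
    have "S (al/3) (1/2) + S (1/2) (2*be/3) = S (al/3) (2*be/3)" unfolding S_def using a3 Henstock_Kurzweil_Integration.integral_combine[where a="al/3" and c="1/2" and b="2*be/3", OF _ _ intg] by auto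
    moreover have "S (al/3) (1/2) \<le> sqrt (1 - (al/3)\<^sup>2) * (1/2 - al/3)" unfolding S_def using a3 by (intro int_bounds) auto
    moreover have "S (1/2) (2*be/3) \<le> sqrt (1 - (1/2)\<^sup>2) * (2*be/3 - 1/2)" unfolding S_def using a3 by (intro int_bounds) auto
    moreover have "sqrt (1 - (al/3)\<^sup>2) \<le> 0.9429"
    proof (rule sqrt_le_num)
      have "(1/3)\<^sup>2 \<le> (al/3)\<^sup>2" using al1 by (intro power_mono) auto
      then show "1 - (al / 3)\<^sup>2 \<le> 0.9429\<^sup>2" by (simp add: power2_eq_square)
    qed simp
    moreover have "sqrt (1 - (1/2::real)\<^sup>2) \<le> 0.8661" by (rule sqrt_le_num) (auto simp: power2_eq_square)
    ultimately have "S (al/3) (2*be/3) \<le> 0.9429 * (1/2 - al/3) + 0.8661 * (2*be/3 - 1/2)"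
      using a3 mult_right_mono[of "sqrt (1 - (al/3)\<^sup>2)" "0.9429" "1/2 - al/3"]
        mult_right_mono[of "sqrt (1 - (1/2::real)\<^sup>2)" "0.8661" "2*be/3 - 1/2"] by linarith
    moreover have eqa: "al * u = al / 3" and eqb: "2 * be * u = 2 * be / 3" using uu by simp_all
    ultimately show ?thesis using True unfolding eqa eqb by simp
  next
    case False
    have "S (al*u) (2*be*u) \<le> sqrt (1 - (al*u)\<^sup>2) * (2*be*u - al*u)" unfolding S_def using al0 au bu by (intro int_bounds) auto
    moreover have "sqrt (1 - (al*u)\<^sup>2) * (2*be*u - al*u) \<le> 1 * (2*be*u - al*u)" using au by (intro mult_right_mono) auto
    ultimately show ?thesis using False by (simp add: algebra_simps)
  qed
  have hT2: "S (al*u\<^sup>2) (2*be*u\<^sup>2) \<le> (2*be - al) * u\<^sup>2"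
  proof -
    have "S (al*u\<^sup>2) (2*be*u\<^sup>2) \<le> sqrt (1 - (al*u\<^sup>2)\<^sup>2) * (2*be*u\<^sup>2 - al*u\<^sup>2)" unfolding S_def using al0 au2 bu2 bu by (intro int_bounds) auto
    moreover have "sqrt (1 - (al*u\<^sup>2)\<^sup>2) * (2*be*u\<^sup>2 - al*u\<^sup>2) \<le> 1 * (2*be*u\<^sup>2 - al*u\<^sup>2)" using au2 by (intro mult_right_mono) auto
    ultimately show ?thesis by (simp add: algebra_simps)
  qed
  have hT3: "S 0 (2*be*u^3) \<le> 2 * be * u^3"
  proof -
    have "S 0 (2*be*u^3) \<le> sqrt (1 - 0\<^sup>2) * (2*be*u^3 - 0)" unfolding S_def using al0 bu3 bu2 bu by (intro int_bounds) auto
    then show ?thesis by simp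
  qed
  have N: "2 * (2/pi * (S p 1 + S (p*u) u + S (p*u\<^sup>2) (u\<^sup>2))) - 2 * (2/pi * (S (al*u) (2*be*u) + S (al*u\<^sup>2) (2*be*u\<^sup>2) + S 0 (2*be*u^3))) > 1/40"
    by (rule numeric[OF assms x_def u_def p1 al1 be1 hS0 hS1 hS2 hT1 hT2 hT3])
  show "2 * mu_ST (I_d1 b 2 c) - 2 * mu_ST (I_d1 b 1 c) > 1 / 40"
    using N M1 M2 unfolding mA0 mA1 mA2 mC1 mC2 mC3 by (simp add: algebra_simps)
qed

end
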